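(* Let $n\ge 4$ and let $\mathcal{D}_n$ be a minimal complete DFA with state set $Q=\{0,\dots,n-1\}$, initial state $0$ and empty state $n-1$, accepting a suffix-free language, and let $T(n)$ be its transition semigroup. If no pair of states is colliding in $T(n)$, then $|T(n)|\le (n-1)^{n-2}+n-2$ and $T(n)$ is a subsemigroup of $\mathbf{W}_{\mathrm{sf}}(n)$.
   Context: A language $L$ is suffix-free if whenever $w\in L$ and $u\in L$ with $u$ a suffix of $w$, then $u=w$. Transformations act on the right ($qt$ is the image of $q$ under $t$). The transition semigroup of a DFA is the semigroup of transformations of its state set generated by the transformations induced by its letters. A minimal complete DFA of a suffix-free language with $n\ge 2$ states has exactly one empty state (a state from which no final state is reachable), labeled $n-1$. An unordered pair $\{p,q\}$ of distinct states of $Q\setminus\{0,n-1\}$ is colliding in $T(n)$ if there exist $t\in T(n)$ and $r\in Q\setminus\{0,n-1\}$ with $0t=p$ and $rt=q$. Define $\mathbf{B}_{\mathrm{sf}}(n)=\{t:Q\to Q \mid 0\notin Qt,\ (n-1)t=n-1,\ \text{and for all } j\ge1:\ 0t^j=n-1 \text{ or } 0t^j\neq qt^j \text{ for all } 0<q<n-1\}$ and $\mathbf{W}_{\mathrm{sf}}(n)=\{t\in\mathbf{B}_{\mathrm{sf}}(n)\mid 0t=n-1 \text{ or } qt=n-1 \text{ for all } 1\le q\le n-2\}$. *)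

theory Defs
  imports Main "HOL-Library.Sublist"
begin

definition dfa :: "nat \<Rightarrow> 'a set \<Rightarrow> (nat \<Rightarrow> 'a \<Rightarrow> nat) \<Rightarrow> nat set \<Rightarrow> bool" where
  "dfa n Al delta F \<longleftrightarrow> finite Al \<and> F \<subseteq> {0..<n}
     \<and> (\<forall>q<n. \<forall>a\<in>Al. delta q a < n)"

definition run :: "(nat \<Rightarrow> 'a \<Rightarrow> nat) \<Rightarrow> nat \<Rightarrow> 'a list \<Rightarrow> nat" where
  "run delta q w = foldl delta q w"

definition lang :: "'a set \<Rightarrow> (nat \<Rightarrow> 'a \<Rightarrow> nat) \<Rightarrow> nat set \<Rightarrow> 'a list set" where
  "lang Al delta F = {w \<in> lists Al. run delta 0 w \<in> F}"

definition suffix_free :: "'a list set \<Rightarrow> bool" where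
  "suffix_free L \<longleftrightarrow> (\<forall>w\<in>L. \<forall>u\<in>L. suffix u w \<longrightarrow> u = w)"

definition minimal_dfa :: "nat \<Rightarrow> 'a set \<Rightarrow> (nat \<Rightarrow> 'a \<Rightarrow> nat) \<Rightarrow> nat set \<Rightarrow> bool" where
  "minimal_dfa n Al delta F \<longleftrightarrow> dfa n Al delta F
     \<and> (\<forall>q<n. \<exists>w\<in>lists Al. run delta 0 w = q)
     \<and> (\<forall>p<n. \<forall>q<n. p \<noteq> q \<longrightarrow>
          (\<exists>w\<in>lists Al. (run delta p w \<in> F) \<noteq> (run delta q w \<in> F)))"

definition empty_state :: "'a set \<Rightarrow> (nat \<Rightarrow> 'a \<Rightarrow> nat) \<Rightarrow> nat set \<Rightarrow> nat \<Rightarrow> bool" where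
  "empty_state Al delta F q \<longleftrightarrow> (\<forall>w\<in>lists Al. run delta q w \<notin> F)"

text \<open>Transformations of Q = {0..<n} are represented as functions nat => nat that are
  the identity outside Q. The transformation induced by a word w (acting on the right,
  so q(uv) = (qu)v).\<close>
definition word_trans :: "nat \<Rightarrow> (nat \<Rightarrow> 'a \<Rightarrow> nat) \<Rightarrow> 'a list \<Rightarrow> nat \<Rightarrow> nat" where
  "word_trans n delta w = (\<lambda>q. if q < n then run delta q w else q)"

text \<open>Transition semigroup: generated by the letter transformations, i.e. the
  transformations induced by nonempty words.\<close>
definition trans_semigroup :: "nat \<Rightarrow> 'a set \<Rightarrow> (nat \<Rightarrow> 'a \<Rightarrow> nat) \<Rightarrow> (nat \<Rightarrow> nat) set" where
  "trans_semigroup n Al delta = {word_trans n delta w | w. w \<in> lists Al \<and> w \<noteq> []}"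

definition colliding :: "nat \<Rightarrow> (nat \<Rightarrow> nat) set \<Rightarrow> nat \<Rightarrow> nat \<Rightarrow> bool" where
  "colliding n T p q \<longleftrightarrow> p \<noteq> q \<and> 0 < p \<and> p < n - 1 \<and> 0 < q \<and> q < n - 1 \<and>
     (\<exists>t\<in>T. \<exists>r. 0 < r \<and> r < n - 1 \<and>
        ((t 0 = p \<and> t r = q) \<or> (t 0 = q \<and> t r = p)))"

definition transformations :: "nat \<Rightarrow> (nat \<Rightarrow> nat) set" where
  "transformations n = {t. (\<forall>q<n. t q < n) \<and> (\<forall>q\<ge>n. t q = q)}"

definition B_sf :: "nat \<Rightarrow> (nat \<Rightarrow> nat) set" where
  "B_sf n = {t \<in> transformations n.
      (\<forall>q<n. t q \<noteq> 0) \<and> t (n - 1) = n - 1 \<and>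
      (\<forall>j\<ge>1. (t ^^ j) 0 = n - 1 \<or> (\<forall>q. 0 < q \<and> q < n - 1 \<longrightarrow> (t ^^ j) 0 \<noteq> (t ^^ j) q))}"

definition W_sf :: "nat \<Rightarrow> (nat \<Rightarrow> nat) set" where
  "W_sf n = {t \<in> B_sf n. t 0 = n - 1 \<or> (\<forall>q. 1 \<le> q \<and> q \<le> n - 2 \<longrightarrow> t q = n - 1)}"

text \<open>Subsemigroup: subset closed under composition (right action: first t then s).\<close>
definition subsemigroup :: "(nat \<Rightarrow> nat) set \<Rightarrow> (nat \<Rightarrow> nat) set \<Rightarrow> bool" where
  "subsemigroup S M \<longleftrightarrow> S \<subseteq> M \<and> (\<forall>s\<in>S. \<forall>t\<in>S. t \<circ> s \<in> S)"

end

theory Submission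
  imports Defs "HOL-Library.FuncSet"
begin

lemma run_append: "run delta q (u @ v) = run delta (run delta q u) v"
  by (simp add: run_def)

lemma run_Nil[simp]: "run delta q [] = q"
  by (simp add: run_def)

lemma run_lt:
  assumes "dfa n Al delta F" "q < n" "w \<in> lists Al"
  shows "run delta q w < n"
  using assms(2,3)
proof (induction w arbitrary: q rule: rev_induct)
  case Nil then show ?case by simp
next
  case (snoc a w)
  then have "run delta q w < n" by simp
  moreover have "a \<in> Al" using snoc by simp
  ultimately show ?case using assms(1) by (simp add: run_def dfa_def)
qed

lemma wt_comp:
  assumes "dfa n Al delta F" "u \<in> lists Al" "v \<in> lists Al"
  shows "word_trans n delta v \<circ> word_trans n delta u = word_trans n delta (u @ v)"
proof
  fix q show "(word_trans n delta v \<circ> word_trans n delta u) q = word_trans n delta (u @ v) q"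
    using run_lt[OF assms(1) _ assms(2), of q]
    by (simp add: word_trans_def run_append)
qed

lemma wt_pow:
  assumes "dfa n Al delta F" "w \<in> lists Al"
  shows "word_trans n delta w ^^ j = word_trans n delta (concat (replicate j w))"
proof (induction j)
  case 0 then show ?case by (auto simp: word_trans_def)
next
  case (Suc j)
  have cl: "concat (replicate j w) \<in> lists Al" using assms(2) by (induction j) auto
  have "word_trans n delta w ^^ Suc j = (word_trans n delta w ^^ j) \<circ> word_trans n delta w"
    by (rule funpow_Suc_right)
  also have "\<dots> = word_trans n delta (w @ concat (replicate j w))"
    using Suc wt_comp[OF assms(1) assms(2) cl] by simp
  finally show ?case by simp
qed

theorem lemma2:
  fixes n :: nat and Al :: "'a set" and delta :: "nat \<Rightarrow> 'a \<Rightarrow> nat" and F :: "nat set"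
  assumes "n \<ge> 4"
    and "minimal_dfa n Al delta F"
    and "empty_state Al delta F (n - 1)"
    and "suffix_free (lang Al delta F)"
    and "\<forall>p q. \<not> colliding n (trans_semigroup n Al delta) p q"
  shows "card (trans_semigroup n Al delta) \<le> (n - 1) ^ (n - 2) + n - 2
    \<and> subsemigroup (trans_semigroup n Al delta) (W_sf n)"
proof -
  have D: "dfa n Al delta F" using assms(2) by (simp add: minimal_dfa_def)
  have reach: "\<And>q. q < n \<Longrightarrow> \<exists>u\<in>lists Al. run delta 0 u = q"
    using assms(2) by (simp add: minimal_dfa_def)
  have acc: "\<And>p. p < n \<Longrightarrow> p \<noteq> n - 1 \<Longrightarrow> \<exists>x\<in>lists Al. run delta p x \<in> F"
  proof -
    fix p assume p: "p < n" "p \<noteq> n - 1"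
    then obtain x where x: "x \<in> lists Al" "(run delta p x \<in> F) \<noteq> (run delta (n-1) x \<in> F)"
      using assms(2) assms(1) unfolding minimal_dfa_def by (metis diff_less less_le_trans zero_less_numeral numeral_le_one_iff semiring_norm(69) not_less zero_less_one)
    then show "\<exists>x\<in>lists Al. run delta p x \<in> F"
      using assms(3) unfolding empty_state_def by blast
  qed
  have key: "\<And>u w. u \<in> lists Al \<Longrightarrow> w \<in> lists Al \<Longrightarrow> run delta (run delta 0 u) w = run delta 0 w
        \<Longrightarrow> run delta 0 w \<noteq> n - 1 \<Longrightarrow> u = []"
  proof -
    fix u w assume u: "u \<in> lists Al" and w: "w \<in> lists Al"
      and e: "run delta (run delta 0 u) w = run delta 0 w" and ne: "run delta 0 w \<noteq> n - 1"
    have "run delta 0 w < n" using run_lt[OF D _ w] assms(1) by simp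
    then obtain x where x: "x \<in> lists Al" "run delta (run delta 0 w) x \<in> F" using acc ne by blast
    have l1: "w @ x \<in> lang Al delta F" using x w by (simp add: lang_def run_append)
    have l2: "u @ w @ x \<in> lang Al delta F" using x w u e by (simp add: lang_def run_append)
    have "suffix (w @ x) (u @ w @ x)" by (simp add: suffix_def)
    then have "w @ x = u @ w @ x" using assms(4) l1 l2 unfolding suffix_free_def by blast
    then show "u = []" by simp
  qed
  have B: "\<And>q w. q < n \<Longrightarrow> w \<in> lists Al \<Longrightarrow> w \<noteq> [] \<Longrightarrow> run delta q w \<noteq> 0"
  proof
    fix q w assume q: "q < n" and w: "w \<in> lists Al" "w \<noteq> []" and e: "run delta q w = 0"
    obtain u where u: "u \<in> lists Al" "run delta 0 u = q" using reach q by blast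
    have "run delta 0 (u @ w) = run delta 0 []" using u e by (simp add: run_append)
    moreover have "run delta 0 [] \<noteq> n - 1" using assms(1) by simp
    ultimately have "u @ w = []" using key[of "u @ w" "[]"] u w by (simp add: run_append)
    then show False using w by simp
  qed
  have C: "\<And>w. w \<in> lists Al \<Longrightarrow> run delta (n-1) w = n - 1"
  proof (rule ccontr)
    fix w assume w: "w \<in> lists Al" and ne: "run delta (n-1) w \<noteq> n - 1"
    have "run delta (n-1) w < n" using run_lt[OF D _ w] assms(1) by simp
    then obtain x where x: "x \<in> lists Al" "run delta (run delta (n-1) w) x \<in> F" using acc ne by blast
    then have "run delta (n-1) (w @ x) \<in> F" by (simp add: run_append)
    moreover have "w @ x \<in> lists Al" using w x by simp
    ultimately show False using assms(3) unfolding empty_state_def by blast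
  qed
  have Dq: "\<And>q w. 0 < q \<Longrightarrow> q < n - 1 \<Longrightarrow> w \<in> lists Al \<Longrightarrow>
      run delta 0 w = n - 1 \<or> run delta 0 w \<noteq> run delta q w"
  proof (rule ccontr)
    fix q w assume q: "0 < q" "q < n - 1" and w: "w \<in> lists Al"
      and c: "\<not> (run delta 0 w = n - 1 \<or> run delta 0 w \<noteq> run delta q w)"
    obtain u where u: "u \<in> lists Al" "run delta 0 u = q" using reach[of q] q by (metis less_imp_diff_less linorder_not_le diff_le_self le_less_trans)
    have "u = []" using key[OF u(1) w] u c by auto
    then show False using u q by simp
  qed
  let ?T = "trans_semigroup n Al delta"
  let ?t = "word_trans n delta"
  have E: "\<And>w q. w \<in> lists Al \<Longrightarrow> w \<noteq> [] \<Longrightarrow> run delta 0 w \<noteq> n - 1 \<Longrightarrow> 1 \<le> q \<Longrightarrow> q < n - 1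
      \<Longrightarrow> run delta q w = n - 1"
  proof (rule ccontr)
    fix w q assume w: "w \<in> lists Al" "w \<noteq> []" and p: "run delta 0 w \<noteq> n - 1"
      and q: "1 \<le> q" "q < n - 1" and c: "run delta q w \<noteq> n - 1"
    have p0: "run delta 0 w \<noteq> 0" using B[of 0 w] w assms(1) by simp
    have pl: "run delta 0 w < n" using run_lt[OF D _ w(1)] assms(1) by simp
    have r0: "run delta q w \<noteq> 0" using B[of q w] w q by simp
    have rl: "run delta q w < n" using run_lt[OF D _ w(1)] q by simp
    have pr: "run delta 0 w \<noteq> run delta q w" using Dq[of q w] q w p by simp
    have tT: "?t w \<in> ?T" using w by (auto simp: trans_semigroup_def)
    have "colliding n ?T (run delta 0 w) (run delta q w)"
      unfolding colliding_def
      apply (intro conjI)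
      using pr p0 pl p r0 rl c apply auto[6]
      apply (rule bexI[OF _ tT])
      apply (rule exI[of _ q])
      using q assms(1) by (simp add: word_trans_def)
    then show False using assms(5) by blast
  qed
  have inW: "\<And>w. w \<in> lists Al \<Longrightarrow> w \<noteq> [] \<Longrightarrow> ?t w \<in> W_sf n"
  proof -
    fix w assume w: "w \<in> lists Al" "w \<noteq> []"
    have tr: "?t w \<in> transformations n"
      using run_lt[OF D _ w(1)] by (simp add: transformations_def word_trans_def)
    have nz: "\<forall>q<n. ?t w q \<noteq> 0" using B w by (simp add: word_trans_def)
    have sk: "?t w (n-1) = n - 1" using C w assms(1) by (simp add: word_trans_def)
    have pw: "\<forall>j\<ge>1. (?t w ^^ j) 0 = n - 1 \<or> (\<forall>q. 0 < q \<and> q < n - 1 \<longrightarrow> (?t w ^^ j) 0 \<noteq> (?t w ^^ j) q)"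
    proof (intro allI impI)
      fix j :: nat assume j: "1 \<le> j"
      have cl: "concat (replicate j w) \<in> lists Al" using w(1) by (induction j) auto
      show "(?t w ^^ j) 0 = n - 1 \<or> (\<forall>q. 0 < q \<and> q < n - 1 \<longrightarrow> (?t w ^^ j) 0 \<noteq> (?t w ^^ j) q)"
        unfolding wt_pow[OF D w(1)]
        using Dq[OF _ _ cl] assms(1) by (auto simp: word_trans_def)
    qed
    have ww: "?t w 0 = n - 1 \<or> (\<forall>q. 1 \<le> q \<and> q \<le> n - 2 \<longrightarrow> ?t w q = n - 1)"
      using E[OF w] assms(1) by (auto simp: word_trans_def)
    show "?t w \<in> W_sf n" using tr nz sk pw ww by (simp add: W_sf_def B_sf_def)
  qed
  have sub: "subsemigroup ?T (W_sf n)"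
    unfolding subsemigroup_def
  proof (intro conjI ballI)
    show "?T \<subseteq> W_sf n" using inW by (auto simp: trans_semigroup_def)
  next
    fix s t assume "s \<in> ?T" "t \<in> ?T"
    then obtain u v where "s = ?t u" "u \<in> lists Al" "u \<noteq> []" "t = ?t v" "v \<in> lists Al" "v \<noteq> []"
      by (auto simp: trans_semigroup_def)
    then show "t \<circ> s \<in> ?T" using wt_comp[OF D, of u v] unfolding trans_semigroup_def
      by (intro CollectI exI[of _ "u @ v"]) auto
  qed
  define S1 where "S1 = {t \<in> transformations n. t 0 = n - 1 \<and> t (n-1) = n - 1 \<and> (\<forall>q<n. t q \<noteq> 0)}"
  define g where "g = (\<lambda>p::nat. \<lambda>q::nat. if q = 0 then p else if q < n then n - 1 else q)"
  define S2 where "S2 = g ` {1..n-2}"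
  have TS: "?T \<subseteq> S1 \<union> S2"
  proof
    fix t assume "t \<in> ?T"
    then obtain w where w: "t = ?t w" "w \<in> lists Al" "w \<noteq> []" by (auto simp: trans_semigroup_def)
    have W: "t \<in> W_sf n" using inW w by simp
    show "t \<in> S1 \<union> S2"
    proof (cases "t 0 = n - 1")
      case True then show ?thesis using W by (auto simp: S1_def W_sf_def B_sf_def)
    next
      case False
      have tr: "t \<in> transformations n" "\<forall>q<n. t q \<noteq> 0" "t (n-1) = n - 1"
        and all: "\<forall>q. 1 \<le> q \<and> q \<le> n - 2 \<longrightarrow> t q = n - 1"
        using W False by (auto simp: W_sf_def B_sf_def)
      have "t 0 < n" "t 0 \<noteq> 0" using tr assms(1) unfolding transformations_def by auto
      then have p: "t 0 \<in> {1..n-2}" using False by auto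
      have "t = g (t 0)"
      proof
        fix q show "t q = g (t 0) q"
        proof (cases "q = 0")
          case False
          then show ?thesis
          proof (cases "q < n - 1")
            case True then show ?thesis using tr all False unfolding g_def by auto
          next
            case F2: False
            show ?thesis
            proof (cases "q < n")
              case True
              then have "q = n - 1" using F2 by auto
              then show ?thesis using tr unfolding g_def by auto
            qed (use tr in \<open>auto simp: g_def transformations_def\<close>)
          qed
        qed (simp add: g_def)
      qed
      then show ?thesis using p by (auto simp: S2_def)
    qed
  qed
  define P where "P = (\<Pi>\<^sub>E i\<in>{1..n-2}. {1..n-1})"
  have finP: "finite P" unfolding P_def by (rule finite_PiE) auto
  have injS1: "inj_on (\<lambda>t. restrict t {1..n-2}) S1"
  proof (rule inj_onI)
    fix s t assume s: "s \<in> S1" and t: "t \<in> S1" and e: "restrict s {1..n-2} = restrict t {1..n-2}"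
    show "s = t"
    proof
      fix q
      show "s q = t q"
      proof (cases "q = 0 \<or> q = n - 1 \<or> q \<ge> n")
        case True then show ?thesis using s t by (auto simp: S1_def transformations_def)
      next
        case False
        then have "q \<in> {1..n-2}" by auto
        then show ?thesis using e by (metis restrict_apply')
      qed
    qed
  qed
  have imS1: "(\<lambda>t. restrict t {1..n-2}) ` S1 \<subseteq> P"
  proof
    fix x assume "x \<in> (\<lambda>t. restrict t {1..n-2}) ` S1"
    then obtain t where t: "t \<in> S1" "x = restrict t {1..n-2}" by auto
    have "\<And>i. i \<in> {1..n-2} \<Longrightarrow> t i \<in> {1..n-1}"
    proof -
      fix i assume i: "i \<in> {1..n-2}"
      then have "i < n" by auto
      then have "t i < n" "t i \<noteq> 0" using t by (auto simp: S1_def transformations_def)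
      then show "t i \<in> {1..n-1}" by auto
    qed
    then show "x \<in> P" using t by (auto simp: P_def)
  qed
  have finS1: "finite S1" using inj_on_finite[OF injS1 imS1 finP] .
  have cS1: "card S1 \<le> (n-1)^(n-2)"
  proof -
    have "card S1 \<le> card P" using card_inj_on_le[OF injS1 imS1 finP] .
    also have "card P = (n-1)^(n-2)" unfolding P_def by (simp add: card_PiE)
    finally show ?thesis .
  qed
  have cS2: "card S2 \<le> n - 2" unfolding S2_def using card_image_le[of "{1..n-2}" g] by simp
  have finS2: "finite S2" unfolding S2_def by simp
  have "card ?T \<le> card (S1 \<union> S2)" using card_mono[OF _ TS] finS1 finS2 by simp
  also have "\<dots> \<le> card S1 + card S2" by (rule card_Un_le)
  also have "\<dots> \<le> (n - 1) ^ (n - 2) + n - 2" using cS1 cS2 assms(1) by simp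
  finally show ?thesis using sub by simp
qed

end
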